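(* For every $f(y,t,x)\in\mathbb{C}[[y,t,x]]$, either $\mathfrak{c}(\operatorname{Conv}_\varphi(f))=0$ or $\operatorname{Conv}_\varphi(f)=\mathbb{C}$.
   Context: Let $x=(x_1,\dots,x_n)$. A formal power series is convergent if its coefficients satisfy $|a_\alpha|\le C^{|\alpha|}$ for some $C$ and all $\alpha\ne0$. Fix a convergent power series $\varphi(t,x)=\sum_{j\ge1}b_j(x)t^j$ with convergent $b_j(x)\in\mathbb{C}[[x]]$ and $b_1(0)=1$. For $s\in\mathbb{C}$ put $\varphi(s,t,x)=s\,b_1(x)t+\sum_{j\ge2}b_j(x)t^j$. For $f\in\mathbb{C}[[y,t,x]]$, $\operatorname{Conv}_\varphi(f)=\{s\in\mathbb{C}: f(\varphi(s,t,x),t,x)\text{ converges as a power series in }(t,x)\}$. $\mathfrak{c}$ denotes logarithmic capacity; for an $F_\sigma$ set $E$, $\mathfrak{c}(E)=0$ means $\mathfrak{c}(E\cap\{|z|\le r\})=0$ for all $r\ge0$. *)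

theory Defs
  imports "HOL-Probability.Probability"
begin

text \<open>The variables x = (x_1..x_n) are indexed by a finite type 'n; a multi-index is
  a function 'n => nat.  A series in (t,x) is given by its coefficient function
  a m alpha = coefficient of t^m x^alpha.  A series in (y,t,x) is given by
  f k m alpha = coefficient of y^k t^m x^alpha.\<close>

type_synonym 'n tx_series = "nat \<Rightarrow> ('n \<Rightarrow> nat) \<Rightarrow> complex"
type_synonym 'n ytx_series = "nat \<Rightarrow> nat \<Rightarrow> ('n \<Rightarrow> nat) \<Rightarrow> complex"
type_synonym 'n x_series = "('n \<Rightarrow> nat) \<Rightarrow> complex"

definition mi_size :: "('n::finite \<Rightarrow> nat) \<Rightarrow> nat" where
  "mi_size \<alpha> = (\<Sum>i\<in>UNIV. \<alpha> i)"

definition x_convergent :: "('n::finite) x_series \<Rightarrow> bool" where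
  "x_convergent a \<longleftrightarrow> (\<exists>C::real. \<forall>\<alpha>. \<alpha> \<noteq> (\<lambda>_. 0) \<longrightarrow> cmod (a \<alpha>) \<le> C ^ mi_size \<alpha>)"

definition tx_convergent :: "('n::finite) tx_series \<Rightarrow> bool" where
  "tx_convergent a \<longleftrightarrow> (\<exists>C::real. \<forall>m \<alpha>. (m, \<alpha>) \<noteq> (0, (\<lambda>_. 0)) \<longrightarrow>
      cmod (a m \<alpha>) \<le> C ^ (m + mi_size \<alpha>))"

definition tx_mult :: "('n::finite) tx_series \<Rightarrow> 'n tx_series \<Rightarrow> 'n tx_series" where
  "tx_mult p q = (\<lambda>m \<alpha>. \<Sum>i\<le>m. \<Sum>\<beta>\<in>{\<beta>. \<forall>j. \<beta> j \<le> \<alpha> j}.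
       p i \<beta> * q (m - i) (\<lambda>j. \<alpha> j - \<beta> j))"

definition tx_one :: "('n::finite) tx_series" where
  "tx_one = (\<lambda>m \<alpha>. if m = 0 \<and> \<alpha> = (\<lambda>_. 0) then 1 else 0)"

primrec tx_pow :: "('n::finite) tx_series \<Rightarrow> nat \<Rightarrow> 'n tx_series" where
  "tx_pow p 0 = tx_one"
| "tx_pow p (Suc k) = tx_mult p (tx_pow p k)"

text \<open>Substitution y := g into f(y,t,x), for g with no t-free terms (g 0 _ = 0), so
  that g^k has t-order >= k and only k <= m contributes to the t^m coefficient.\<close>
definition subst_y :: "('n::finite) ytx_series \<Rightarrow> 'n tx_series \<Rightarrow> 'n tx_series" where
  "subst_y f g = (\<lambda>m \<alpha>. \<Sum>k\<le>m. tx_mult (f k) (tx_pow g k) m \<alpha>)"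

definition phi_s :: "(nat \<Rightarrow> ('n::finite) x_series) \<Rightarrow> complex \<Rightarrow> 'n tx_series" where
  "phi_s b s = (\<lambda>m \<alpha>. if m = 0 then 0 else if m = 1 then s * b 1 \<alpha> else b m \<alpha>)"

definition phi_series :: "(nat \<Rightarrow> ('n::finite) x_series) \<Rightarrow> 'n tx_series" where
  "phi_series b = (\<lambda>m \<alpha>. if m = 0 then 0 else b m \<alpha>)"

definition Conv_phi :: "(nat \<Rightarrow> ('n::finite) x_series) \<Rightarrow> 'n ytx_series \<Rightarrow> complex set" where
  "Conv_phi b f = {s. tx_convergent (subst_y f (phi_s b s))}"

section \<open>Logarithmic capacity (Ransford, Def. 5.1.1)\<close>

text \<open>Logarithmic energy I(mu) = int int log(1/|z-w|) dmu(z) dmu(w), written as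
  (positive part) - (negative part); for compactly supported mu the negative part is finite.\<close>
definition log_energy :: "complex measure \<Rightarrow> ereal" where
  "log_energy \<mu> =
     enn2ereal (\<integral>\<^sup>+ z. \<integral>\<^sup>+ w. (if z = w then \<infinity> else ennreal (- ln (cmod (z - w)))) \<partial>\<mu> \<partial>\<mu>)
   - enn2ereal (\<integral>\<^sup>+ z. \<integral>\<^sup>+ w. (if z = w then 0 else ennreal (ln (cmod (z - w)))) \<partial>\<mu> \<partial>\<mu>)"

definition exp_neg_ereal :: "ereal \<Rightarrow> ereal" where
  "exp_neg_ereal I = (if I = \<infinity> then 0 else if I = - \<infinity> then \<infinity> else ereal (exp (- real_of_ereal I)))"

definition log_capacity :: "complex set \<Rightarrow> ereal" where
  "log_capacity E = Sup (insert 0 {exp_neg_ereal (log_energy \<mu>) | \<mu>.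
      sets \<mu> = sets borel \<and> prob_space \<mu> \<and>
      (\<exists>K. compact K \<and> K \<subseteq> E \<and> emeasure \<mu> K = 1)})"

end

theory Submission
  imports Defs "HOL-Computational_Algebra.Fundamental_Theorem_Algebra"
begin


definition pf :: "nat \<Rightarrow> (complex \<Rightarrow> complex) \<Rightarrow> bool" where
  "pf d F \<longleftrightarrow> (\<exists>p. degree p \<le> d \<and> F = poly p)"

lemma pf_const: "pf d (\<lambda>s. c)"
  unfolding pf_def by (rule exI[of _ "[:c:]"]) auto

lemma pf_mono: "pf a F \<Longrightarrow> a \<le> b \<Longrightarrow> pf b F"
  unfolding pf_def by (auto intro: order_trans)

lemma pf_add: "pf d F \<Longrightarrow> pf d G \<Longrightarrow> pf d (\<lambda>s. F s + G s)"
  unfolding pf_def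
proof (elim exE conjE)
  fix p q assume "degree p \<le> d" "F = poly p" "degree q \<le> d" "G = poly q"
  then show "\<exists>r. degree r \<le> d \<and> (\<lambda>s. F s + G s) = poly r"
    by (intro exI[of _ "p + q"]) (auto simp: degree_add_le)
qed

lemma pf_mult: "pf a F \<Longrightarrow> pf b G \<Longrightarrow> pf (a + b) (\<lambda>s. F s * G s)"
  unfolding pf_def
proof (elim exE conjE)
  fix p q assume "degree p \<le> a" "F = poly p" "degree q \<le> b" "G = poly q"
  then show "\<exists>r. degree r \<le> a + b \<and> (\<lambda>s. F s * G s) = poly r"
    by (intro exI[of _ "p * q"]) (auto intro: order.trans[OF degree_mult_le])
qed

lemma pf_sum: "(\<And>i. i \<in> I \<Longrightarrow> pf d (F i)) \<Longrightarrow> pf d (\<lambda>s. \<Sum>i\<in>I. F i s)"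
proof (cases "finite I")
  case True
  assume "\<And>i. i \<in> I \<Longrightarrow> pf d (F i)"
  with True show ?thesis
  proof (induction I rule: finite_induct)
    case empty then show ?case by (simp add: pf_const)
  next
    case (insert x A)
    then show ?case by (simp add: pf_add)
  qed
qed (simp add: pf_const)

lemma pf_var: "pf 1 (\<lambda>s. s * c)"
  unfolding pf_def by (rule exI[of _ "[:0, c:]"]) (auto simp: fun_eq_iff degree_pCons_le)

lemma pf_phi: "pf m (\<lambda>s. phi_s b s m \<alpha>)"
proof -
  consider "m = 0" | "m = 1" | "m \<noteq> 0 \<and> m \<noteq> 1" by blast
  then show ?thesis
  proof cases
    case 1 then show ?thesis by (simp add: phi_s_def pf_const)
  next
    case 2
    have "pf 1 (\<lambda>s. s * b 1 \<alpha>)" by (rule pf_var)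
    then show ?thesis using 2 by (simp add: phi_s_def)
  next
    case 3 then show ?thesis by (simp add: phi_s_def pf_const)
  qed
qed

lemma pf_pow: "pf m (\<lambda>s. tx_pow (phi_s b s) k m \<alpha>)"
proof (induction k arbitrary: m \<alpha>)
  case 0 then show ?case by (simp add: tx_one_def pf_const)
next
  case (Suc k)
  show ?case unfolding tx_pow.simps tx_mult_def
  proof (rule pf_sum)
    fix i assume "i \<in> {..m}"
    then have "pf (i + (m - i)) (\<lambda>s. \<Sum>\<beta>\<in>{\<beta>. \<forall>j. \<beta> j \<le> \<alpha> j}. phi_s b s i \<beta> * tx_pow (phi_s b s) k (m - i) (\<lambda>j. \<alpha> j - \<beta> j))"
      by (intro pf_sum pf_mult pf_phi Suc)
    then show "pf m (\<lambda>s. \<Sum>\<beta>\<in>{\<beta>. \<forall>j. \<beta> j \<le> \<alpha> j}. phi_s b s i \<beta> * tx_pow (phi_s b s) k (m - i) (\<lambda>j. \<alpha> j - \<beta> j))"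
      using \<open>i \<in> {..m}\<close> by simp
  qed
qed

lemma pf_subst: "pf m (\<lambda>s. subst_y f (phi_s b s) m \<alpha>)"
  unfolding subst_y_def tx_mult_def
proof (intro pf_sum)
  fix k i \<beta> assume "i \<in> {..m}"
  then have "pf (0 + (m - i)) (\<lambda>s. f k i \<beta> * tx_pow (phi_s b s) k (m - i) (\<lambda>j. \<alpha> j - \<beta> j))"
    by (intro pf_mult pf_const pf_pow)
  then show "pf m (\<lambda>s. f k i \<beta> * tx_pow (phi_s b s) k (m - i) (\<lambda>j. \<alpha> j - \<beta> j))"
    by (rule pf_mono) simp
qed



definition G :: "complex \<Rightarrow> complex \<Rightarrow> ennreal" where
  "G z w = (if z = w then \<infinity> else ennreal (- ln (cmod (z - w))))"

lemma borel_meas_lnpoly: "(\<lambda>w. ln (cmod (poly p w))) \<in> borel_measurable borel"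
proof -
  have "poly p \<in> borel_measurable borel"
    by (intro borel_measurable_continuous_onI continuous_on_poly continuous_on_id)
  then show ?thesis by measurable
qed

lemma borel_meas_lnlin: "(\<lambda>w. ln (cmod (w - z))) \<in> borel_measurable borel"
  by measurable

lemma borel_meas_G1: "G z \<in> borel_measurable borel"
  unfolding G_def by measurable

lemma borel_meas_G: "(\<lambda>x. G (fst x) (snd x)) \<in> borel_measurable (borel \<Otimes>\<^sub>M borel)"
  unfolding G_def by measurable

context
  fixes \<nu> :: "complex measure" and r B R :: real
  assumes prob: "prob_space \<nu>" and sets_nu: "sets \<nu> = sets borel"
    and supp: "AE w in \<nu>. cmod w \<le> r"
    and potb: "\<And>z. (\<integral>\<^sup>+w. G z w \<partial>\<nu>) \<le> ennreal B"
    and B0: "0 \<le> B" and r0: "0 \<le> r" and R0: "0 \<le> R"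
begin

lemma bm_eq: "borel_measurable \<nu> = borel_measurable borel"
  by (rule measurable_cong_sets[OF sets_nu refl])

lemma atom0: "emeasure \<nu> {z} = 0"
proof -
  interpret prob_space \<nu> by (rule prob)
  have sz: "{z} \<in> sets \<nu>" using sets_nu by simp
  have "(\<integral>\<^sup>+w. \<infinity> * indicator {z} w \<partial>\<nu>) \<le> (\<integral>\<^sup>+w. G z w \<partial>\<nu>)"
    by (rule nn_integral_mono) (auto simp: G_def indicator_def)
  also have "\<dots> \<le> ennreal B" by (rule potb)
  finally have "\<infinity> * emeasure \<nu> {z} \<le> ennreal B"
    using nn_integral_cmult_indicator[OF sz, of \<infinity>] by simp
  show ?thesis
  proof (rule ccontr)
    assume "emeasure \<nu> {z} \<noteq> 0"
    then have "\<infinity> * emeasure \<nu> {z} = \<infinity>" by (simp add: ennreal_top_mult)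
    with \<open>\<infinity> * emeasure \<nu> {z} \<le> ennreal B\<close> show False by (simp add: top_unique)
  qed
qed

lemma AE_ne: "AE w in \<nu>. w \<noteq> z"
proof -
  have "{z} \<in> null_sets \<nu>" using atom0 sets_nu by (auto intro: null_setsI)
  then show ?thesis by (rule AE_I') auto
qed

lemma int_lin: "integrable \<nu> (\<lambda>w. ln (cmod (w - z)))"
proof -
  interpret prob_space \<nu> by (rule prob)
  define k where "k = ln (r + cmod z + 1)"
  have mf: "(\<lambda>w. ln (cmod (w - z))) \<in> borel_measurable \<nu>"
    unfolding bm_eq by (rule borel_meas_lnlin)
  have "AE w in \<nu>. ennreal (norm (ln (cmod (w - z)))) \<le> G z w + ennreal k"
    using supp
  proof eventually_elim
    case (elim w)
    show ?case
    proof (cases "z = w")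
      case True then show ?thesis by (simp add: G_def)
    next
      case False
      then have d0: "cmod (w - z) > 0" by simp
      have dle: "cmod (w - z) \<le> r + cmod z" using elim norm_triangle_ineq4[of w z] by simp
      show ?thesis
      proof (cases "ln (cmod (w - z)) \<ge> 0")
        case True
        have kp: "0 < r + cmod z + 1" using r0 norm_ge_zero[of z] by linarith
        have "ln (cmod (w - z)) \<le> k" unfolding k_def using d0 dle kp by (subst ln_le_cancel_iff) auto
        then have "ennreal (norm (ln (cmod (w - z)))) \<le> ennreal k" using True by (intro ennreal_leI) simp
        also have "\<dots> \<le> G z w + ennreal k" by simp
        finally show ?thesis .
      next
        case False
        then have "ennreal (norm (ln (cmod (w - z)))) = G z w"
          using \<open>z \<noteq> w\<close> by (simp add: G_def norm_minus_commute)
        then show ?thesis by simp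
      qed
    qed
  qed
  then have "(\<integral>\<^sup>+w. ennreal (norm (ln (cmod (w - z)))) \<partial>\<nu>) \<le> (\<integral>\<^sup>+w. G z w + ennreal k \<partial>\<nu>)"
    by (rule nn_integral_mono_AE)
  also have "\<dots> = (\<integral>\<^sup>+w. G z w \<partial>\<nu>) + ennreal k"
    using borel_meas_G1[of z] unfolding bm_eq[symmetric]
    by (subst nn_integral_add) (auto simp: emeasure_space_1)
  also have "\<dots> \<le> ennreal B + ennreal k" using potb by (rule add_right_mono)
  also have "\<dots> < \<infinity>" using ennreal_add_eq_top[of "ennreal B" "ennreal k"] by (simp add: less_top[symmetric])
  finally show ?thesis by (intro integrableI_bounded mf)
qed

lemma lower: "- B \<le> (\<integral>w. ln (cmod (w - z)) \<partial>\<nu>)"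
proof -
  interpret prob_space \<nu> by (rule prob)
  define f where "f = (\<lambda>w. ln (cmod (w - z)))"
  have fi: "integrable \<nu> f" unfolding f_def by (rule int_lin)
  have gi: "integrable \<nu> (\<lambda>w. max (- f w) 0)"
    using fi by (intro integrable_max integrable_minus) auto
  have "(\<integral>w. max (- f w) 0 \<partial>\<nu>) = enn2real (\<integral>\<^sup>+w. ennreal (max (- f w) 0) \<partial>\<nu>)"
    using gi by (intro integral_eq_nn_integral) auto
  also have "(\<integral>\<^sup>+w. ennreal (max (- f w) 0) \<partial>\<nu>) \<le> (\<integral>\<^sup>+w. G z w \<partial>\<nu>)"
  proof (rule nn_integral_mono)
    fix w show "ennreal (max (- f w) 0) \<le> G z w"
      by (cases "z = w") (auto simp: G_def f_def norm_minus_commute ennreal_max_0)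
  qed
  then have "enn2real (\<integral>\<^sup>+w. ennreal (max (- f w) 0) \<partial>\<nu>) \<le> enn2real (ennreal B)"
    using potb[of z] by (intro enn2real_mono) auto
  finally have "(\<integral>w. max (- f w) 0 \<partial>\<nu>) \<le> B" using B0 by simp
  moreover have "(\<integral>w. - f w \<partial>\<nu>) \<le> (\<integral>w. max (- f w) 0 \<partial>\<nu>)"
    using fi gi by (intro integral_mono) auto
  ultimately show ?thesis unfolding f_def by simp
qed

definition cc where "cc = max (ln 4) (ln (R + (2 * r + R + 1)) + B)"

lemma cc_nonneg: "0 \<le> cc"
  unfolding cc_def by (auto intro: max.coboundedI1)

lemma key: "cmod z0 \<le> R \<Longrightarrow> cmod (z0 - z) \<le> exp ((\<integral>w. ln (cmod (w - z)) \<partial>\<nu>) + cc)"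
proof -
  interpret prob_space \<nu> by (rule prob)
  assume z0: "cmod z0 \<le> R"
  define I where "I = (\<integral>w. ln (cmod (w - z)) \<partial>\<nu>)"
  show ?thesis
  proof (cases "z0 = z")
    case True then show ?thesis by simp
  next
    case False
    then have d0: "0 < cmod (z0 - z)" by simp
    have "ln (cmod (z0 - z)) \<le> I + cc"
    proof (cases "cmod z \<ge> 2 * r + R + 1")
      case True
      have "AE w in \<nu>. ln (cmod (z0 - z)) - ln 4 \<le> ln (cmod (w - z))"
        using supp
      proof eventually_elim
        case (elim w)
        have a: "cmod (z0 - z) \<le> 2 * cmod z"
          using norm_triangle_ineq4[of z0 z] z0 True r0 by simp
        have b: "cmod z - r \<le> cmod (w - z)"
          using norm_triangle_ineq2[of z w] elim by (simp add: norm_minus_commute)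
        have c1: "cmod (z0 - z) / 4 \<le> cmod (w - z)" using a b True r0 R0 by linarith
        have c2: "0 < cmod (w - z)" using b True r0 R0 by linarith
        have "ln (cmod (z0 - z)) - ln 4 = ln (cmod (z0 - z) / 4)"
          using d0 by (simp add: ln_div)
        also have "\<dots> \<le> ln (cmod (w - z))"
          using c1 c2 d0 by (subst ln_le_cancel_iff) auto
        finally show ?case .
      qed
      then have "(\<integral>w. ln (cmod (z0 - z)) - ln 4 \<partial>\<nu>) \<le> I"
        unfolding I_def by (intro integral_mono_AE int_lin) auto
      then have "ln (cmod (z0 - z)) - ln 4 \<le> I" by (simp add: prob_space)
      then show ?thesis unfolding cc_def by linarith
    next
      case False
      have "cmod (z0 - z) \<le> R + (2 * r + R + 1)"
        using norm_triangle_ineq4[of z0 z] z0 False by simp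
      then have "ln (cmod (z0 - z)) \<le> ln (R + (2 * r + R + 1))"
        using d0 R0 r0 by (subst ln_le_cancel_iff) auto
      moreover have "- B \<le> I" unfolding I_def by (rule lower)
      ultimately show ?thesis unfolding cc_def by linarith
    qed
    then have "exp (ln (cmod (z0 - z))) \<le> exp (I + cc)" by (simp only: exp_le_cancel_iff)
    moreover have "exp (ln (cmod (z0 - z))) = cmod (z0 - z)" using d0 by simp
    ultimately show ?thesis unfolding I_def by simp
  qed
qed

lemma ind: "p \<noteq> 0 \<Longrightarrow> integrable \<nu> (\<lambda>w. ln (cmod (poly p w))) \<and> (AE w in \<nu>. poly p w \<noteq> 0) \<and>
   (\<forall>z0. cmod z0 \<le> R \<longrightarrow> cmod (poly p z0) \<le> exp ((\<integral>w. ln (cmod (poly p w)) \<partial>\<nu>) + cc * degree p))"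
proof (induction "degree p" arbitrary: p)
  case 0
  interpret prob_space \<nu> by (rule prob)
  from 0 obtain a where pa: "p = [:a:]" by (metis degree_eq_zeroE)
  with 0 have a0: "a \<noteq> 0" by simp
  show ?case using a0 by (simp add: pa prob_space)
next
  case (Suc n)
  interpret prob_space \<nu> by (rule prob)
  have "\<not> constant (poly p)" using Suc(2) by (simp add: constant_degree)
  then obtain z where "poly p z = 0" using fundamental_theorem_of_algebra by blast
  then have "[:-z, 1:] dvd p" by (simp add: poly_eq_0_iff_dvd)
  then obtain q where pq: "p = [:-z, 1:] * q" by (elim dvdE)
  with Suc.prems have q0: "q \<noteq> 0" by auto
  have dq: "degree p = 1 + degree q" using q0 unfolding pq by (subst degree_mult_eq) auto
  with Suc(2) have "n = degree q" by simp
  from Suc(1)[OF this q0] have IHi: "integrable \<nu> (\<lambda>w. ln (cmod (poly q w)))"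
    and IHa: "AE w in \<nu>. poly q w \<noteq> 0"
    and IHb: "\<And>z0. cmod z0 \<le> R \<Longrightarrow> cmod (poly q z0) \<le> exp ((\<integral>w. ln (cmod (poly q w)) \<partial>\<nu>) + cc * degree q)"
    by auto
  have pw: "\<And>w. poly p w = (w - z) * poly q w" unfolding pq by (simp add: algebra_simps)
  have AEeq: "AE w in \<nu>. ln (cmod (poly p w)) = ln (cmod (w - z)) + ln (cmod (poly q w))"
    using IHa AE_ne[of z]
  proof eventually_elim
    case (elim w) then show ?case by (simp add: pw norm_mult ln_mult)
  qed
  have AEnz: "AE w in \<nu>. poly p w \<noteq> 0"
    using IHa AE_ne[of z] by eventually_elim (simp add: pw)
  have mp: "(\<lambda>w. ln (cmod (poly p w))) \<in> borel_measurable \<nu>" unfolding bm_eq by (rule borel_meas_lnpoly)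
  have ms: "(\<lambda>w. ln (cmod (w - z)) + ln (cmod (poly q w))) \<in> borel_measurable \<nu>"
    unfolding bm_eq using borel_meas_lnpoly[of q] borel_meas_lnlin[of z] by measurable
  have intp: "integrable \<nu> (\<lambda>w. ln (cmod (poly p w)))"
    using integrable_cong_AE[OF mp ms AEeq] int_lin[of z] IHi by auto
  have Ieq: "(\<integral>w. ln (cmod (poly p w)) \<partial>\<nu>) = (\<integral>w. ln (cmod (w - z)) \<partial>\<nu>) + (\<integral>w. ln (cmod (poly q w)) \<partial>\<nu>)"
    using integral_cong_AE[OF mp ms AEeq] int_lin[of z] IHi by simp
  have bnd: "cmod (poly p z0) \<le> exp ((\<integral>w. ln (cmod (poly p w)) \<partial>\<nu>) + cc * degree p)"
    if z0: "cmod z0 \<le> R" for z0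
  proof -
    have "cmod (poly p z0) = cmod (z0 - z) * cmod (poly q z0)" by (simp add: pw norm_mult)
    also have "\<dots> \<le> exp ((\<integral>w. ln (cmod (w - z)) \<partial>\<nu>) + cc) * exp ((\<integral>w. ln (cmod (poly q w)) \<partial>\<nu>) + cc * degree q)"
      by (intro mult_mono key IHb z0) auto
    also have "\<dots> = exp ((\<integral>w. ln (cmod (poly p w)) \<partial>\<nu>) + cc * degree p)"
      unfolding Ieq dq by (simp add: exp_add[symmetric] algebra_simps)
    finally show ?thesis .
  qed
  show ?case using intp AEnz bnd by blast
qed

lemma BW:
  assumes "degree p \<le> n" "0 < M" "AE w in \<nu>. cmod (poly p w) \<le> M" "cmod z0 \<le> R"
  shows "cmod (poly p z0) \<le> M * exp (cc * n)"
proof (cases "p = 0")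
  case True then show ?thesis using assms by simp
next
  case False
  interpret prob_space \<nu> by (rule prob)
  from ind[OF False] have i: "integrable \<nu> (\<lambda>w. ln (cmod (poly p w)))"
    and a: "AE w in \<nu>. poly p w \<noteq> 0"
    and b: "cmod (poly p z0) \<le> exp ((\<integral>w. ln (cmod (poly p w)) \<partial>\<nu>) + cc * degree p)"
    using assms(4) by auto
  have "AE w in \<nu>. ln (cmod (poly p w)) \<le> ln M"
    using a assms(3) by eventually_elim (simp add: ln_le_cancel_iff assms(2))
  then have "(\<integral>w. ln (cmod (poly p w)) \<partial>\<nu>) \<le> (\<integral>w. ln M \<partial>\<nu>)"
    by (intro integral_mono_AE i) auto
  then have I: "(\<integral>w. ln (cmod (poly p w)) \<partial>\<nu>) \<le> ln M" by (simp add: prob_space)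
  have "cc * degree p \<le> cc * n" using assms(1) cc_nonneg by (intro mult_left_mono) auto
  with I have "exp ((\<integral>w. ln (cmod (poly p w)) \<partial>\<nu>) + cc * degree p) \<le> exp (ln M + cc * n)" by simp
  also have "\<dots> = M * exp (cc * n)" using assms(2) by (simp add: exp_add)
  finally show ?thesis using b by simp
qed

end



lemma ennreal_add_le: "0 \<le> a \<Longrightarrow> ennreal (a + b) \<le> ennreal a + ennreal b"
proof (cases "0 \<le> b")
  case True
  assume "0 \<le> a" then show ?thesis using True by (simp add: ennreal_plus)
next
  case False
  assume "0 \<le> a"
  then have "ennreal (a + b) \<le> ennreal a" using False by (intro ennreal_leI) simp
  also have "\<dots> \<le> ennreal a + ennreal b" by simp
  finally show ?thesis .
qed

lemma G_shift:
  assumes "w \<in> A" "z \<notin> A" "w0 \<in> A" "\<And>y. y \<in> A \<Longrightarrow> dist z w0 \<le> dist z y"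
  shows "G z w \<le> ennreal (ln 2) + G w0 w"
proof (cases "w0 = w")
  case True then show ?thesis by (simp add: G_def)
next
  case False
  have zw: "z \<noteq> w" using assms by auto
  have d1: "cmod (w0 - w) \<le> 2 * cmod (z - w)"
  proof -
    have "cmod (w0 - w) \<le> cmod (w0 - z) + cmod (z - w)" using norm_triangle_ineq[of "w0 - z" "z - w"] by simp
    moreover have "cmod (w0 - z) \<le> cmod (z - w)"
      using assms(4)[OF assms(1)] by (simp add: dist_norm norm_minus_commute)
    ultimately show ?thesis by simp
  qed
  have p1: "0 < cmod (w0 - w)" "0 < cmod (z - w)" using False zw by auto
  have "ln (cmod (w0 - w)) \<le> ln (2 * cmod (z - w))"
    using d1 p1 by (subst ln_le_cancel_iff) auto
  also have "\<dots> = ln 2 + ln (cmod (z - w))" using p1 by (simp add: ln_mult)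
  finally have "- ln (cmod (z - w)) \<le> ln 2 + - ln (cmod (w0 - w))" by simp
  then have "ennreal (- ln (cmod (z - w))) \<le> ennreal (ln 2 + - ln (cmod (w0 - w)))"
    by (rule ennreal_leI)
  also have "\<dots> \<le> ennreal (ln 2) + ennreal (- ln (cmod (w0 - w)))"
    by (rule ennreal_add_le) simp
  finally show ?thesis using zw False by (simp add: G_def)
qed

lemma construct:
  fixes \<mu> :: "complex measure" and E :: "nat \<Rightarrow> complex set" and K :: "complex set"
  assumes prob: "prob_space \<mu>" and sets_mu: "sets \<mu> = sets borel"
    and K: "compact K" "emeasure \<mu> K = 1" and KE: "K \<subseteq> (\<Union>C. E C)"
    and Eb: "\<And>C. E C \<in> sets borel"
    and fin: "(\<integral>\<^sup>+z. (\<integral>\<^sup>+w. G z w \<partial>\<mu>) \<partial>\<mu>) \<noteq> \<infinity>"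
  shows "\<exists>C \<nu> B. prob_space \<nu> \<and> sets \<nu> = sets borel \<and> (AE w in \<nu>. w \<in> K \<inter> E C) \<and> 0 \<le> B \<and>
           (\<forall>z. (\<integral>\<^sup>+w. G z w \<partial>\<nu>) \<le> ennreal B)"
proof -
  interpret prob_space \<mu> by (rule prob)
  have bm_eq: "borel_measurable \<mu> = borel_measurable borel"
    by (rule measurable_cong_sets[OF sets_mu refl])
  have sp: "space \<mu> = UNIV" using sets_eq_imp_space_eq[OF sets_mu] by simp
  define pot where "pot z = (\<integral>\<^sup>+w. G z w \<partial>\<mu>)" for z
  have Gm: "(\<lambda>(z, w). G z w) \<in> borel_measurable (\<mu> \<Otimes>\<^sub>M \<mu>)"
  proof -
    have "sets (\<mu> \<Otimes>\<^sub>M \<mu>) = sets (borel \<Otimes>\<^sub>M borel)"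
      by (rule sets_pair_measure_cong[OF sets_mu sets_mu])
    then have eq: "borel_measurable (\<mu> \<Otimes>\<^sub>M \<mu>) = borel_measurable (borel \<Otimes>\<^sub>M borel)"
      by (rule measurable_cong_sets) simp
    show ?thesis unfolding case_prod_beta' eq by (rule borel_meas_G)
  qed
  have potm: "pot \<in> borel_measurable \<mu>"
    unfolding pot_def by (rule borel_measurable_nn_integral[OF Gm])
  have AEfin: "AE z in \<mu>. pot z \<noteq> \<infinity>"
    using potm fin unfolding pot_def by (intro nn_integral_PInf_AE) auto
  have Kb: "K \<in> sets \<mu>" using K(1) sets_mu by (simp add: compact_imp_closed)
  have AEK: "AE z in \<mu>. z \<in> K"
    using K(2) Kb by (subst AE_in_set_eq_1) (auto simp: emeasure_eq_measure)
  define S where "S C N = K \<inter> E C \<inter> {z. pot z \<le> of_nat N}" for C N :: nat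
  have Sm: "S C N \<in> sets \<mu>" for C N
  proof -
    have "{z \<in> space \<mu>. pot z \<le> of_nat N} \<in> sets \<mu>" using potm by measurable
    then show ?thesis unfolding S_def using Kb Eb[of C] sets_mu sp
      by (auto intro!: sets.Int)
  qed
  have "\<exists>C N. emeasure \<mu> (S C N) \<noteq> 0"
  proof (rule ccontr)
    assume "\<not> ?thesis"
    then have z: "\<And>C N. emeasure \<mu> (S C N) = 0" by auto
    have "AE z in \<mu>. z \<notin> S C N" for C N
      using z[of C N] Sm[of C N] by (intro AE_I'[of "S C N"]) (auto intro: null_setsI)
    then have "AE z in \<mu>. \<forall>C. \<forall>N. z \<notin> S C N"
      by (simp add: AE_all_countable)
    then have "AE z in \<mu>. False"
      using AEK AEfin
    proof eventually_elim
      case (elim z)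
      from elim KE obtain C where "z \<in> E C" by blast
      have "pot z < top" using elim(3) by (simp add: less_top[symmetric])
      then obtain N where "pot z < of_nat N" using ennreal_Ex_less_of_nat by blast
      then have "z \<in> S C N" using elim \<open>z \<in> E C\<close> unfolding S_def by auto
      with elim show False by blast
    qed
    then show False by simp
  qed
  then obtain C N where SCN: "emeasure \<mu> (S C N) \<noteq> 0" by blast
  have "emeasure \<mu> (S C N) = (SUP K' \<in> {K'. K' \<subseteq> S C N \<and> compact K'}. emeasure \<mu> K')"
    using Sm[of C N] sets_mu by (intro inner_regular) auto
  with SCN have "0 < (SUP K' \<in> {K'. K' \<subseteq> S C N \<and> compact K'}. emeasure \<mu> K')"
    by (simp add: zero_less_iff_neq_zero)
  then obtain A where A: "A \<subseteq> S C N" "compact A" "0 < emeasure \<mu> A"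
    by (auto simp: less_SUP_iff)
  have Ab: "A \<in> sets \<mu>" using A(2) sets_mu by (simp add: compact_imp_closed)
  define m where "m = measure \<mu> A"
  have m0: "0 < m" using A(3) unfolding m_def by (simp add: emeasure_eq_measure)
  have Ane: "A \<noteq> {}" using A(3) by auto
  define f where "f w = ennreal (1 / m) * indicator A w" for w
  have fm: "f \<in> borel_measurable \<mu>" unfolding f_def using Ab by measurable
  define \<nu> where "\<nu> = density \<mu> f"
  have sets_nu: "sets \<nu> = sets borel" unfolding \<nu>_def using sets_mu by simp
  have spn: "space \<nu> = UNIV" unfolding \<nu>_def using sp by simp
  have "emeasure \<nu> (space \<nu>) = (\<integral>\<^sup>+w. f w \<partial>\<mu>)"
    unfolding spn unfolding \<nu>_def using fm
    by (subst emeasure_density) (auto simp: sp[symmetric])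
  also have "\<dots> = ennreal (1 / m) * emeasure \<mu> A"
    unfolding f_def using Ab by (simp add: nn_integral_cmult_indicator)
  also have "\<dots> = 1" using m0 unfolding m_def
    by (simp add: emeasure_eq_measure ennreal_mult[symmetric])
  finally have probn: "prob_space \<nu>" by (intro prob_spaceI)
  have AEn: "AE w in \<nu>. w \<in> K \<inter> E C"
    unfolding \<nu>_def using fm A(1)
    by (subst AE_density) (auto simp: f_def S_def indicator_def)
  define B where "B = (ln 2 + real N) / m"
  have B0: "0 \<le> B" unfolding B_def using m0 by simp
  have bnd: "(\<integral>\<^sup>+w. G z w \<partial>\<nu>) \<le> ennreal B" for z
  proof -
    have Gzm: "G z \<in> borel_measurable \<mu>" unfolding bm_eq by (rule borel_meas_G1)
    have "(\<integral>\<^sup>+w. G z w \<partial>\<nu>) = (\<integral>\<^sup>+w. f w * G z w \<partial>\<mu>)"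
      unfolding \<nu>_def using fm Gzm by (rule nn_integral_density)
    also have "\<dots> = ennreal (1 / m) * (\<integral>\<^sup>+w. indicator A w * G z w \<partial>\<mu>)"
      unfolding f_def using Ab Gzm
      by (subst nn_integral_cmult[symmetric]) (auto simp: mult.assoc)
    also have "(\<integral>\<^sup>+w. indicator A w * G z w \<partial>\<mu>) \<le> ennreal (ln 2 + real N)"
    proof (cases "z \<in> A")
      case True
      have "(\<integral>\<^sup>+w. indicator A w * G z w \<partial>\<mu>) \<le> pot z"
        unfolding pot_def by (rule nn_integral_mono) (auto simp: indicator_def)
      also have "\<dots> \<le> of_nat N" using True A(1) unfolding S_def by auto
      also have "\<dots> \<le> ennreal (ln 2 + real N)" by (simp add: ennreal_of_nat_eq_real_of_nat)
      finally show ?thesis .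
    next
      case False
      obtain w0 where w0: "w0 \<in> A" "\<And>y. y \<in> A \<Longrightarrow> dist z w0 \<le> dist z y"
        using distance_attains_inf[OF compact_imp_closed[OF A(2)] Ane] by blast
      have pw0: "pot w0 \<le> of_nat N" using w0(1) A(1) unfolding S_def by auto
      have "(\<integral>\<^sup>+w. indicator A w * G z w \<partial>\<mu>) \<le> (\<integral>\<^sup>+w. ennreal (ln 2) + G w0 w \<partial>\<mu>)"
        by (rule nn_integral_mono) (auto simp: indicator_def intro: G_shift[OF _ False w0])
      also have "\<dots> = ennreal (ln 2) + pot w0"
        unfolding pot_def using borel_meas_G1[of w0] unfolding bm_eq[symmetric]
        by (subst nn_integral_add) (auto simp: emeasure_space_1)
      also have "\<dots> \<le> ennreal (ln 2) + of_nat N" using pw0 by (rule add_left_mono)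
      also have "\<dots> = ennreal (ln 2 + real N)"
        by (simp add: ennreal_of_nat_eq_real_of_nat ennreal_plus)
      finally show ?thesis .
    qed
    then have "ennreal (1 / m) * (\<integral>\<^sup>+w. indicator A w * G z w \<partial>\<mu>) \<le> ennreal (1 / m) * ennreal (ln 2 + real N)"
      by (rule mult_left_mono) simp
    also have "\<dots> = ennreal (1 / m * (ln 2 + real N))"
      by (rule ennreal_mult[symmetric]) (use m0 in auto)
    also have "\<dots> = ennreal B" unfolding B_def by simp
    finally show ?thesis .
  qed
  show ?thesis using probn sets_nu AEn B0 bnd by blast
qed



lemma BW_ex:
  fixes \<nu> :: "complex measure"
  assumes "prob_space \<nu>" "sets \<nu> = sets borel" "AE w in \<nu>. cmod w \<le> r"
    "\<And>z. (\<integral>\<^sup>+w. G z w \<partial>\<nu>) \<le> ennreal B" "0 \<le> B" "0 \<le> r" "0 \<le> R"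
  shows "\<exists>c\<ge>0. \<forall>p n M z0. degree p \<le> n \<longrightarrow> 0 < M \<longrightarrow> (AE w in \<nu>. cmod (poly p w) \<le> M)
            \<longrightarrow> cmod z0 \<le> R \<longrightarrow> cmod (poly p z0) \<le> M * exp (c * n)"
  using BW[OF assms] cc_nonneg[OF assms] by blast

theorem mainTheorem3:
  fixes b :: "nat \<Rightarrow> ('n::finite \<Rightarrow> nat) \<Rightarrow> complex"
    and f :: "nat \<Rightarrow> nat \<Rightarrow> ('n \<Rightarrow> nat) \<Rightarrow> complex"
  assumes "\<And>j. j \<ge> 1 \<Longrightarrow> x_convergent (b j)"
    and "tx_convergent (phi_series b)"
    and "b 1 (\<lambda>_. 0) = 1"
  shows "(\<forall>r\<ge>0. log_capacity (Conv_phi b f \<inter> cball 0 r) = 0) \<or> Conv_phi b f = UNIV"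
proof (cases "\<forall>r\<ge>0. log_capacity (Conv_phi b f \<inter> cball 0 r) = 0")
  case True then show ?thesis by blast
next
  case False
  then obtain r where r0: "0 \<le> r" and cap: "log_capacity (Conv_phi b f \<inter> cball 0 r) \<noteq> 0" by blast
  define X where "X = {exp_neg_ereal (log_energy \<mu>) | \<mu>.
      sets \<mu> = sets borel \<and> prob_space \<mu> \<and>
      (\<exists>K. compact K \<and> K \<subseteq> Conv_phi b f \<inter> cball 0 r \<and> emeasure \<mu> K = 1)}"
  have "\<exists>x\<in>X. x \<noteq> 0"
  proof (rule ccontr)
    assume "\<not> ?thesis"
    then have ins: "insert 0 X = {0}" by auto
    have "log_capacity (Conv_phi b f \<inter> cball 0 r) = Sup (insert 0 X)"
      unfolding log_capacity_def X_def by (rule refl)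
    also have "\<dots> = 0" unfolding ins by simp
    finally show False using cap by simp
  qed
  then obtain \<mu> K where mu: "sets \<mu> = sets borel" "prob_space \<mu>" and K: "compact K"
    "K \<subseteq> Conv_phi b f \<inter> cball 0 r" "emeasure \<mu> K = 1"
    and en: "exp_neg_ereal (log_energy \<mu>) \<noteq> 0"
    unfolding X_def by blast
  have "log_energy \<mu> \<noteq> \<infinity>" using en by (auto simp: exp_neg_ereal_def)
  then have fin: "(\<integral>\<^sup>+z. (\<integral>\<^sup>+w. G z w \<partial>\<mu>) \<partial>\<mu>) \<noteq> \<infinity>"
    unfolding log_energy_def G_def by auto
  define cf where "cf s m \<alpha> = subst_y f (phi_s b s) m \<alpha>" for s m \<alpha>
  have pfc: "\<exists>p. degree p \<le> m \<and> (\<lambda>s. cf s m \<alpha>) = poly p" for m \<alpha>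
    using pf_subst[of m f b \<alpha>] unfolding pf_def cf_def by blast
  define E where "E C = {s. \<forall>m \<alpha>. (m, \<alpha>) \<noteq> (0, (\<lambda>_. 0)) \<longrightarrow> cmod (cf s m \<alpha>) \<le> real C ^ (m + mi_size \<alpha>)}" for C :: nat
  have Eclosed: "closed (E C)" for C
    unfolding E_def
  proof (intro closed_Collect_all)
    fix m \<alpha>
    show "closed {s. (m, \<alpha>) \<noteq> (0, (\<lambda>_. 0)) \<longrightarrow> cmod (cf s m \<alpha>) \<le> real C ^ (m + mi_size \<alpha>)}"
    proof (cases "(m, \<alpha>) = (0, (\<lambda>_. 0))")
      case True then show ?thesis by simp
    next
      case False
      obtain p where p: "(\<lambda>s. cf s m \<alpha>) = poly p" using pfc by blast
      have "closed {s. cmod (poly p s) \<le> real C ^ (m + mi_size \<alpha>)}"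
        by (intro closed_Collect_le continuous_intros)
      moreover have "(\<lambda>s. cf s m \<alpha>) = poly p" by (rule p)
      ultimately show ?thesis using False by (simp add: fun_eq_iff)
    qed
  qed
  have Eb: "E C \<in> sets borel" for C using Eclosed by (rule borel_closed)
  have KE: "K \<subseteq> (\<Union>C. E C)"
  proof
    fix s assume "s \<in> K"
    with K(2) have "tx_convergent (cf s)" unfolding Conv_phi_def cf_def by auto
    then obtain C0 :: real where C0: "\<And>m \<alpha>. (m, \<alpha>) \<noteq> (0, (\<lambda>_. 0)) \<Longrightarrow> cmod (cf s m \<alpha>) \<le> C0 ^ (m + mi_size \<alpha>)"
      unfolding tx_convergent_def by blast
    define C where "C = nat \<lceil>\<bar>C0\<bar>\<rceil>"
    have "\<bar>C0\<bar> \<le> real C" unfolding C_def by linarith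
    have "cmod (cf s m \<alpha>) \<le> real C ^ (m + mi_size \<alpha>)" if "(m, \<alpha>) \<noteq> (0, (\<lambda>_. 0))" for m \<alpha>
    proof -
      have "cmod (cf s m \<alpha>) \<le> C0 ^ (m + mi_size \<alpha>)" using C0 that .
      also have "\<dots> \<le> \<bar>C0\<bar> ^ (m + mi_size \<alpha>)" by (metis abs_ge_self power_abs)
      also have "\<dots> \<le> real C ^ (m + mi_size \<alpha>)" by (intro power_mono \<open>\<bar>C0\<bar> \<le> real C\<close>) simp
      finally show ?thesis .
    qed
    then show "s \<in> (\<Union>C. E C)" unfolding E_def by blast
  qed
  obtain C \<nu> B where nu: "prob_space \<nu>" "sets \<nu> = sets borel" "AE w in \<nu>. w \<in> K \<inter> E C" "0 \<le> B"
    "\<And>z. (\<integral>\<^sup>+w. G z w \<partial>\<nu>) \<le> ennreal B"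
    using construct[OF mu(2) mu(1) K(1) K(3) KE Eb fin] by blast
  have supp: "AE w in \<nu>. cmod w \<le> r" using nu(3) by eventually_elim (use K(2) in auto)
  have "z0 \<in> Conv_phi b f" for z0
  proof -
    obtain c where c0: "0 \<le> c" and c: "\<And>p n M. degree p \<le> n \<Longrightarrow> 0 < M \<Longrightarrow> (AE w in \<nu>. cmod (poly p w) \<le> M)
            \<Longrightarrow> cmod (poly p z0) \<le> M * exp (c * n)"
      using BW_ex[OF nu(1) nu(2) supp nu(5) nu(4) r0, of "cmod z0"] by auto
    have "cmod (cf z0 m \<alpha>) \<le> (real (Suc C) * exp c) ^ (m + mi_size \<alpha>)"
      if "(m, \<alpha>) \<noteq> (0, (\<lambda>_. 0))" for m \<alpha>
    proof -
      obtain p where dp: "degree p \<le> m" and p: "(\<lambda>s. cf s m \<alpha>) = poly p" using pfc by blast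
      define M where "M = real (Suc C) ^ (m + mi_size \<alpha>)"
      have M0: "0 < M" unfolding M_def by simp
      have "AE w in \<nu>. cmod (poly p w) \<le> M"
        using nu(3)
      proof eventually_elim
        case (elim w)
        then have "cmod (cf w m \<alpha>) \<le> real C ^ (m + mi_size \<alpha>)" using that unfolding E_def by auto
        also have "\<dots> \<le> M" unfolding M_def by (intro power_mono) auto
        finally show ?case using p by (metis)
      qed
      from c[OF dp M0 this] have "cmod (poly p z0) \<le> M * exp (c * m)" .
      also have "exp (c * m) = exp c ^ m" by (simp add: exp_of_nat_mult[symmetric] mult.commute)
      also have "exp c ^ m \<le> exp c ^ (m + mi_size \<alpha>)" using c0 by (intro power_increasing) auto
      then have "M * exp c ^ m \<le> M * exp c ^ (m + mi_size \<alpha>)" using M0 by simp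
      also have "M * exp c ^ (m + mi_size \<alpha>) = (real (Suc C) * exp c) ^ (m + mi_size \<alpha>)"
        unfolding M_def by (simp add: power_mult_distrib)
      finally show ?thesis using p by (metis)
    qed
    then show ?thesis unfolding Conv_phi_def tx_convergent_def cf_def by blast
  qed
  then show ?thesis by blast
qed


end
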